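(* Let $1/2<\delta<1$, let $P\subset\mathbb{R}^1$ be a finite point set containing the source $s$ located at $0$, and let $I\subset\mathbb{R}^1$ be an interval of length $\Delta_1$ at distance $\Delta_2$ from the source, that is, $I=[\Delta_2,\Delta_2+\Delta_1]$ or $I=[-\Delta_1-\Delta_2,-\Delta_2]$, for some $\Delta_2>0$. Let $P_{\mathrm{cheap}}(I)$ be the set of all cheap points of $P$ that are in $I$ and whose successor lies in $I$ as well. Then $\sum_{p\in P_{\mathrm{cheap}}(I)}\rho_{\mathrm{st}}(p)^2\le\delta(\Delta_1+\Delta_2)\Delta_1$.
   Context: Points of $P$ left of $s$ are $\ell_1,\ell_2,\dots$ and right of $s$ are $r_1,r_2,\dots$, numbered by increasing distance from $s$. The successor $\mathrm{suc}(p)$ of $r_i$ is $r_{i+1}$ and of $\ell_i$ is $\ell_{i+1}$; $s$ has successors $r_1,\ell_1$; the farthest point on each side (extreme) has no successor ($\mathrm{nil}$). The standard range $\rho_{\mathrm{st}}(p)$ of $p\ne s$ is $|p\,\mathrm{suc}(p)|$, or $0$ if $p$ is extreme. A point $p\ne s$ is expensive if $\mathrm{suc}(p)\ne\mathrm{nil}$ and $|p\,\mathrm{suc}(p)|>\delta\cdot|s\,\mathrm{suc}(p)|$, and cheap otherwise; $s$ is always expensive. *)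

theory Defs
  imports Main "HOL.Real"
begin

text \<open>Points are reals; the source s is located at 0. The successor of a point p \<noteq> 0
  is the next point of P farther away from 0 on the same side (None = nil).
  The source has two successors and is never cheap, so suc is only used for p \<noteq> 0.\<close>

definition suc :: "real set \<Rightarrow> real \<Rightarrow> real option" where
  "suc P p =
    (if p > 0 then (if \<exists>q\<in>P. q > p then Some (Min {q\<in>P. q > p}) else None)
     else if p < 0 then (if \<exists>q\<in>P. q < p then Some (Max {q\<in>P. q < p}) else None)
     else None)"

definition rho_st :: "real set \<Rightarrow> real \<Rightarrow> real" where
  "rho_st P p = (case suc P p of None \<Rightarrow> 0 | Some q \<Rightarrow> \<bar>p - q\<bar>)"

definition expensive :: "real \<Rightarrow> real set \<Rightarrow> real \<Rightarrow> bool" where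
  "expensive \<delta> P p = (p = 0 \<or> (\<exists>q. suc P p = Some q \<and> \<bar>p - q\<bar> > \<delta> * \<bar>0 - q\<bar>))"

definition cheap :: "real \<Rightarrow> real set \<Rightarrow> real \<Rightarrow> bool" where
  "cheap \<delta> P p = (\<not> expensive \<delta> P p)"

definition P_cheap :: "real \<Rightarrow> real set \<Rightarrow> real set \<Rightarrow> real set" where
  "P_cheap \<delta> P I = {p \<in> P. cheap \<delta> P p \<and> p \<in> I \<and> (\<exists>q. suc P p = Some q \<and> q \<in> I)}"

end

theory Submission
  imports Defs
begin

lemma suc_pos:
  assumes "finite P" "p > 0" "suc P p = Some q"
  shows "q \<in> P" "q > p" "\<And>r. r \<in> P \<Longrightarrow> r > p \<Longrightarrow> q \<le> r"
proof -
  have ex: "\<exists>q\<in>P. q > p" and qd: "q = Min {q\<in>P. q > p}"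
    using assms unfolding suc_def by (auto split: if_splits)
  have fin: "finite {q\<in>P. q > p}" "{q\<in>P. q > p} \<noteq> {}" using assms(1) ex by auto
  have "q \<in> {q\<in>P. q > p}" using Min_in[OF fin] qd by simp
  then show "q \<in> P" "q > p" by auto
  show "\<And>r. r \<in> P \<Longrightarrow> r > p \<Longrightarrow> q \<le> r" using qd fin by simp
qed

lemma suc_neg:
  assumes "finite P" "p < 0" "suc P p = Some q"
  shows "q \<in> P" "q < p" "\<And>r. r \<in> P \<Longrightarrow> r < p \<Longrightarrow> r \<le> q"
proof -
  have ex: "\<exists>q\<in>P. q < p" and qd: "q = Max {q\<in>P. q < p}"
    using assms unfolding suc_def by (auto split: if_splits)
  have fin: "finite {q\<in>P. q < p}" "{q\<in>P. q < p} \<noteq> {}" using assms(1) ex by auto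
  have "q \<in> {q\<in>P. q < p}" using Max_in[OF fin] qd by simp
  then show "q \<in> P" "q < p" by auto
  show "\<And>r. r \<in> P \<Longrightarrow> r < p \<Longrightarrow> r \<le> q" using qd fin by simp
qed

lemma sum_pos:
  assumes "finite P" "finite S"
  shows "\<forall>b. a \<le> b \<longrightarrow> (\<forall>p\<in>S. p \<in> P \<and> p > 0 \<and> a \<le> p \<and> (\<exists>q. suc P p = Some q \<and> q \<le> b))
      \<longrightarrow> (\<Sum>p\<in>S. rho_st P p) \<le> b - a"
  using assms(2)
proof (induction S rule: finite_linorder_max_induct)
  case empty
  then show ?case by simp
next
  case (insert m A)
  show ?case
  proof (intro allI impI)
    fix b assume ab: "a \<le> b" and H: "\<forall>p\<in>insert m A. p \<in> P \<and> p > 0 \<and> a \<le> p \<and> (\<exists>q. suc P p = Some q \<and> q \<le> b)"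
    obtain qm where qm: "suc P m = Some qm" "qm \<le> b" and m: "m \<in> P" "m > 0" "a \<le> m" using H by auto
    have "qm > m" using suc_pos[OF assms(1) m(2) qm(1)] by simp
    have rm: "rho_st P m = qm - m" using qm `qm > m` unfolding rho_st_def by simp
    have "\<forall>p\<in>A. p \<in> P \<and> p > 0 \<and> a \<le> p \<and> (\<exists>q. suc P p = Some q \<and> q \<le> m)"
    proof
      fix p assume pA: "p \<in> A"
      then obtain q where q: "suc P p = Some q" and p: "p \<in> P" "p > 0" "a \<le> p" using H by auto
      have "q \<le> m" using suc_pos(3)[OF assms(1) p(2) q m(1)] insert.hyps(2) pA by auto
      then show "p \<in> P \<and> p > 0 \<and> a \<le> p \<and> (\<exists>q. suc P p = Some q \<and> q \<le> m)" using p q by auto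
    qed
    then have "(\<Sum>p\<in>A. rho_st P p) \<le> m - a" using insert.IH m(3) by blast
    moreover have "m \<notin> A" using insert.hyps(2) by auto
    ultimately show "(\<Sum>p\<in>insert m A. rho_st P p) \<le> b - a" using insert.hyps(1) rm qm(2) by simp
  qed
qed

lemma sum_neg:
  assumes "finite P" "finite S"
  shows "\<forall>a. a \<le> b \<longrightarrow> (\<forall>p\<in>S. p \<in> P \<and> p < 0 \<and> p \<le> b \<and> (\<exists>q. suc P p = Some q \<and> a \<le> q))
      \<longrightarrow> (\<Sum>p\<in>S. rho_st P p) \<le> b - a"
  using assms(2)
proof (induction S rule: finite_linorder_min_induct)
  case empty
  then show ?case by simp
next
  case (insert m A)
  show ?case
  proof (intro allI impI)
    fix a assume ab: "a \<le> b" and H: "\<forall>p\<in>insert m A. p \<in> P \<and> p < 0 \<and> p \<le> b \<and> (\<exists>q. suc P p = Some q \<and> a \<le> q)"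
    obtain qm where qm: "suc P m = Some qm" "a \<le> qm" and m: "m \<in> P" "m < 0" "m \<le> b" using H by auto
    have "qm < m" using suc_neg[OF assms(1) m(2) qm(1)] by simp
    have rm: "rho_st P m = m - qm" using qm `qm < m` unfolding rho_st_def by simp
    have "\<forall>p\<in>A. p \<in> P \<and> p < 0 \<and> p \<le> b \<and> (\<exists>q. suc P p = Some q \<and> m \<le> q)"
    proof
      fix p assume pA: "p \<in> A"
      then obtain q where q: "suc P p = Some q" and p: "p \<in> P" "p < 0" "p \<le> b" using H by auto
      have "m \<le> q" using suc_neg(3)[OF assms(1) p(2) q m(1)] insert.hyps(2) pA by auto
      then show "p \<in> P \<and> p < 0 \<and> p \<le> b \<and> (\<exists>q. suc P p = Some q \<and> m \<le> q)" using p q by auto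
    qed
    then have "(\<Sum>p\<in>A. rho_st P p) \<le> b - m" using insert.IH m(3) by blast
    moreover have "m \<notin> A" using insert.hyps(2) by auto
    ultimately show "(\<Sum>p\<in>insert m A. rho_st P p) \<le> b - a" using insert.hyps(1) rm qm(2) by simp
  qed
qed

theorem lemma11:
  fixes \<delta> \<Delta>1 \<Delta>2 :: real and P I :: "real set"
  assumes "1/2 < \<delta>" and "\<delta> < 1"
    and "finite P" and "0 \<in> P"
    and "0 \<le> \<Delta>1" and "0 < \<Delta>2"
    and "I = {\<Delta>2 .. \<Delta>2 + \<Delta>1} \<or> I = {-\<Delta>1 - \<Delta>2 .. -\<Delta>2}"
  shows "(\<Sum>p\<in>P_cheap \<delta> P I. (rho_st P p)\<^sup>2) \<le> \<delta> * (\<Delta>1 + \<Delta>2) * \<Delta>1"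
proof -
  let ?S = "P_cheap \<delta> P I"
  have finS: "finite ?S" using assms(3) unfolding P_cheap_def by simp
  have I: "\<And>x. x \<in> I \<Longrightarrow> \<bar>x\<bar> \<le> \<Delta>1 + \<Delta>2" using assms(5,6,7) by auto
  have each: "(rho_st P p)\<^sup>2 \<le> (\<delta> * (\<Delta>1 + \<Delta>2)) * rho_st P p" if pS: "p \<in> ?S" for p
  proof -
    obtain q where q: "suc P p = Some q" "q \<in> I" and ch: "cheap \<delta> P p" and p0: "p \<noteq> 0"
      using pS unfolding P_cheap_def using assms(5,6,7) by auto
    have r: "rho_st P p = \<bar>p - q\<bar>" using q unfolding rho_st_def by simp
    have c: "\<bar>p - q\<bar> \<le> \<delta> * \<bar>q\<bar>" using ch q p0 unfolding cheap_def expensive_def by auto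
    have "\<delta> * \<bar>q\<bar> \<le> \<delta> * (\<Delta>1 + \<Delta>2)" using I[OF q(2)] assms(1) by (simp add: mult_left_mono)
    then have c2: "\<bar>p - q\<bar> \<le> \<delta> * (\<Delta>1 + \<Delta>2)" using c by linarith
    have "\<bar>p - q\<bar> * \<bar>p - q\<bar> \<le> (\<delta> * (\<Delta>1 + \<Delta>2)) * \<bar>p - q\<bar>"
      using mult_right_mono[OF c2, of "\<bar>p - q\<bar>"] by simp
    then show ?thesis using r by (simp add: power2_eq_square)
  qed
  have sumr: "(\<Sum>p\<in>?S. rho_st P p) \<le> \<Delta>1"
    using assms(7)
  proof
    assume Ip: "I = {\<Delta>2 .. \<Delta>2 + \<Delta>1}"
    have "\<forall>p\<in>?S. p \<in> P \<and> p > 0 \<and> \<Delta>2 \<le> p \<and> (\<exists>q. suc P p = Some q \<and> q \<le> \<Delta>2 + \<Delta>1)"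
      using Ip assms(6) unfolding P_cheap_def by auto
    then show ?thesis using sum_pos[OF assms(3) finS, of \<Delta>2, THEN spec, of "\<Delta>2 + \<Delta>1"] assms(5) by auto
  next
    assume Ip: "I = {-\<Delta>1 - \<Delta>2 .. -\<Delta>2}"
    have "\<forall>p\<in>?S. p \<in> P \<and> p < 0 \<and> p \<le> -\<Delta>2 \<and> (\<exists>q. suc P p = Some q \<and> -\<Delta>1 - \<Delta>2 \<le> q)"
      using Ip assms(6) unfolding P_cheap_def by auto
    then show ?thesis using sum_neg[OF assms(3) finS, of "-\<Delta>2", THEN spec, of "-\<Delta>1 - \<Delta>2"] assms(5) by auto
  qed
  have "(\<Sum>p\<in>?S. (rho_st P p)\<^sup>2) \<le> (\<Sum>p\<in>?S. (\<delta> * (\<Delta>1 + \<Delta>2)) * rho_st P p)"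
    by (rule sum_mono) (use each in auto)
  also have "\<dots> = (\<delta> * (\<Delta>1 + \<Delta>2)) * (\<Sum>p\<in>?S. rho_st P p)" by (simp add: sum_distrib_left)
  also have "\<dots> \<le> (\<delta> * (\<Delta>1 + \<Delta>2)) * \<Delta>1"
    using sumr assms(1,5,6) by (intro mult_left_mono) auto
  finally show ?thesis .
qed

end
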